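(* Let $n\ge 7$ and let $S$ be a nonlocal metric basis of $W_{1,n}$ (so $S\subseteq\{0,\dots,n-1\}$ and $|S|\ge 2$). Then: (i) every gap of $S$ has at most $4$ vertices; (ii) at most one gap of $S$ has at least $3$ vertices; (iii) if a gap $A_{i,j}$ of $S$ has at least $2$ vertices, then each gap of $S$ neighboring $A_{i,j}$ (i.e., the gap of the form $A_{h,i}$ and the gap of the form $A_{j,k}$) has at most one vertex. (iv) Moreover, $W_{1,n}$ has a nonlocal metric basis $S'\subseteq\{0,\dots,n-1\}$ that satisfies (i)–(iii) and has no gap with exactly $3$ vertices.
   Context: The wheel $W_{1,n}=K_1+C_n$ has cycle vertices $0,1,\dots,n-1$ (arithmetic modulo $n$, $i$ adjacent to $i\pm1$) and a center adjacent to all of them; $d(u,v)$ is the shortest-path distance. A set $X$ of vertices resolves two vertices $u,v$ if some $x\in X$ satisfies $d(u,x)\neq d(v,x)$. $X$ is a nonlocal resolving set if it resolves every pair of distinct non-adjacent vertices; the nonlocal metric dimension is the minimum size of such a set, and a nonlocal metric basis is a nonlocal resolving set of minimum size (for $n\ge 7$ no such basis contains the center). For $X\subseteq\{0,\dots,n-1\}$ with $|X|\ge 2$, a gap of $X$ is a set $A_{i,j}=\{i+1,i+2,\dots,j-1\}$ (indices mod $n$, proceeding from $i$ in increasing direction until $j$), where $i\ne j$ are elements of $X$ such that $\{i+1,\dots,j-1\}\cap X=\emptyset$; a gap may be empty, and its number of vertices is $|A_{i,j}|$. Gaps $A_{h,i}$ and $A_{i,j}$ sharing the endpoint $i$ are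 called neighboring gaps. *)

theory Defs
  imports Main
begin

text \<open>Wheel graph W_{1,n}: cycle vertices 0..n-1, center vertex n.\<close>

definition wheel_center :: "nat \<Rightarrow> nat" where
  "wheel_center n = n"

definition wheel_V :: "nat \<Rightarrow> nat set" where
  "wheel_V n = {..n}"

definition wheel_adj :: "nat \<Rightarrow> nat \<Rightarrow> nat \<Rightarrow> bool" where
  "wheel_adj n u v \<longleftrightarrow> u \<in> wheel_V n \<and> v \<in> wheel_V n \<and> u \<noteq> v \<and>
     (u = wheel_center n \<or> v = wheel_center n \<or>
      (u < n \<and> v < n \<and> (v = (u + 1) mod n \<or> u = (v + 1) mod n)))"

definition wheel_walk :: "nat \<Rightarrow> nat list \<Rightarrow> bool" where
  "wheel_walk n xs \<longleftrightarrow> xs \<noteq> [] \<and> set xs \<subseteq> wheel_V n \<and>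
     (\<forall>i. Suc i < length xs \<longrightarrow> wheel_adj n (xs ! i) (xs ! Suc i))"

definition wheel_dist :: "nat \<Rightarrow> nat \<Rightarrow> nat \<Rightarrow> nat" where
  "wheel_dist n u v = (LEAST k. \<exists>xs. wheel_walk n xs \<and> hd xs = u \<and> last xs = v \<and> length xs = Suc k)"

definition resolves :: "nat \<Rightarrow> nat set \<Rightarrow> nat \<Rightarrow> nat \<Rightarrow> bool" where
  "resolves n X u v \<longleftrightarrow> (\<exists>x\<in>X. wheel_dist n u x \<noteq> wheel_dist n v x)"

definition nonlocal_resolving :: "nat \<Rightarrow> nat set \<Rightarrow> bool" where
  "nonlocal_resolving n X \<longleftrightarrow> X \<subseteq> wheel_V n \<and>
     (\<forall>u\<in>wheel_V n. \<forall>v\<in>wheel_V n. u \<noteq> v \<and> \<not> wheel_adj n u v \<longrightarrow> resolves n X u v)"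

definition nonlocal_dim :: "nat \<Rightarrow> nat" where
  "nonlocal_dim n = (LEAST k. \<exists>X. nonlocal_resolving n X \<and> card X = k)"

definition nonlocal_basis :: "nat \<Rightarrow> nat set \<Rightarrow> bool" where
  "nonlocal_basis n X \<longleftrightarrow> nonlocal_resolving n X \<and> card X = nonlocal_dim n"

text \<open>The set A_{i,j} = {i+1, ..., j-1} (mod n), going from i in increasing direction to j.\<close>
definition gap_set :: "nat \<Rightarrow> nat \<Rightarrow> nat \<Rightarrow> nat set" where
  "gap_set n i j = {(i + k) mod n | k. 0 < k \<and> k < (j + n - i) mod n}"

definition is_gap :: "nat \<Rightarrow> nat set \<Rightarrow> nat \<Rightarrow> nat \<Rightarrow> bool" where
  "is_gap n S i j \<longleftrightarrow> i \<in> S \<and> j \<in> S \<and> i \<noteq> j \<and> gap_set n i j \<inter> S = {}"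

definition gap_props :: "nat \<Rightarrow> nat set \<Rightarrow> bool" where
  "gap_props n S \<longleftrightarrow>
     (\<forall>i j. is_gap n S i j \<longrightarrow> card (gap_set n i j) \<le> 4) \<and>
     (\<forall>i j i' j'. is_gap n S i j \<and> is_gap n S i' j' \<and>
        card (gap_set n i j) \<ge> 3 \<and> card (gap_set n i' j') \<ge> 3 \<longrightarrow> i = i' \<and> j = j') \<and>
     (\<forall>i j. is_gap n S i j \<and> card (gap_set n i j) \<ge> 2 \<longrightarrow>
        (\<forall>h. is_gap n S h i \<longrightarrow> card (gap_set n h i) \<le> 1) \<and>
        (\<forall>k. is_gap n S j k \<longrightarrow> card (gap_set n j k) \<le> 1))"

end

theory Submission
  imports Defs
begin


locale W = fixes n :: nat assumes n7: "7 \<le> n"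
begin

definition sh :: "int \<Rightarrow> nat \<Rightarrow> nat" where "sh k x = nat ((int x + k) mod int n)"

lemma npos: "0 < n" using n7 by simp
lemma n7i: "7 \<le> int n" using n7 by simp

lemma sh_lt[simp]: "sh k x < n"
  unfolding sh_def using npos by (simp add: nat_less_iff)

lemma sh_sh[simp]: "sh a (sh b x) = sh (b + a) x"
  unfolding sh_def using npos by (simp add: mod_add_left_eq add.assoc)

lemma sh0[simp]: "x < n \<Longrightarrow> sh 0 x = x"
  unfolding sh_def by simp

lemma sh_eq_iff: "x < n \<Longrightarrow> sh a x = sh b x \<longleftrightarrow> (a - b) mod int n = 0"
proof -
  have "sh a x = sh b x \<longleftrightarrow> (int x + a) mod int n = (int x + b) mod int n"
    unfolding sh_def using npos by (simp add: eq_nat_nat_iff)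
  also have "\<dots> \<longleftrightarrow> (a - b) mod int n = 0"
    by (simp add: mod_eq_dvd_iff dvd_eq_mod_eq_0)
  finally show ?thesis .
qed

lemma mod0_small: "\<bar>k\<bar> < int n \<Longrightarrow> k mod int n = 0 \<longleftrightarrow> k = 0"
proof
  assume h: "\<bar>k\<bar> < int n" "k mod int n = 0"
  then have "int n dvd k" by (simp add: mod_eq_0_iff_dvd)
  then have d: "int n dvd \<bar>k\<bar>" by simp
  show "k = 0"
  proof (rule ccontr)
    assume "k \<noteq> 0"
    then have "int n \<le> \<bar>k\<bar>" using d zdvd_imp_le by simp
    then show False using h(1) by simp
  qed
qed simp

lemma sh1: "sh 1 u = (u + 1) mod n"
proof -
  have "(int u + 1) mod int n = int ((u+1) mod n)" by (simp add: of_nat_mod ac_simps)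
  then show ?thesis unfolding sh_def by simp
qed

lemma sh_solve: "z < n \<Longrightarrow> w < n \<Longrightarrow> sh d z = w \<longleftrightarrow> z = sh (-d) w"
proof
  assume "z < n" "w < n" "sh d z = w"
  then show "z = sh (-d) w" using sh_sh[of "-d" d z] by simp
next
  assume "z < n" "w < n" "z = sh (-d) w"
  then show "sh d z = w" using sh_sh[of d "-d" w] by simp
qed

lemma adj_cyc: "u < n \<Longrightarrow> y < n \<Longrightarrow> wheel_adj n u y \<longleftrightarrow> y = sh 1 u \<or> y = sh (-1) u"
proof -
  assume u: "u < n" and y: "y < n"
  have a: "u = (y + 1) mod n \<longleftrightarrow> y = sh (-1) u"
    using sh_solve[OF y u, of 1] by (auto simp: sh1)
  have b: "sh 1 u \<noteq> u" "sh (-1) u \<noteq> u" using u n7 by (simp_all add: sh_eq_iff[of u _ 0, simplified] mod0_small)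
  show ?thesis unfolding wheel_adj_def wheel_V_def wheel_center_def
    using u y a b by (auto simp: sh1)
qed

lemma walk1: "wheel_walk n [a] \<longleftrightarrow> a \<in> wheel_V n" by (simp add: wheel_walk_def)
lemma walk2: "wheel_walk n [a,b] \<longleftrightarrow> wheel_adj n a b"
  by (auto simp: wheel_walk_def wheel_adj_def less_Suc_eq)
lemma walk3: "wheel_adj n a b \<Longrightarrow> wheel_adj n b c \<Longrightarrow> wheel_walk n [a,b,c]"
  by (auto simp: wheel_walk_def wheel_adj_def less_Suc_eq)

lemma dist: assumes "u \<in> wheel_V n" "v \<in> wheel_V n"
  shows "wheel_dist n u v = (if u = v then 0 else if wheel_adj n u v then 1 else 2)"
proof -
  define P where "P k \<longleftrightarrow> (\<exists>xs. wheel_walk n xs \<and> hd xs = u \<and> last xs = v \<and> length xs = Suc k)" for k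
  have dd: "wheel_dist n u v = (LEAST k. P k)" unfolding wheel_dist_def P_def by simp
  have P0: "P 0 \<longleftrightarrow> u = v"
  proof
    assume "P 0" then obtain xs where "wheel_walk n xs" "hd xs = u" "last xs = v" "length xs = 1"
      unfolding P_def by auto
    then show "u = v" by (cases xs) auto
  next
    assume "u = v" then show "P 0" unfolding P_def using assms by (intro exI[of _ "[u]"]) (simp add: walk1)
  qed
  have P1: "P 1 \<Longrightarrow> wheel_adj n u v"
  proof -
    assume "P 1" then obtain xs where "wheel_walk n xs" "hd xs = u" "last xs = v" "length xs = 2"
      unfolding P_def by auto
    then obtain a b where "xs = [a,b]" by (auto simp: length_Suc_conv numeral_2_eq_2)
    then show ?thesis using \<open>wheel_walk n xs\<close> \<open>hd xs = u\<close> \<open>last xs = v\<close> by (simp add: walk2)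
  qed
  show ?thesis
  proof (cases "u = v")
    case True then show ?thesis using dd P0 by simp
  next
    case uv: False
    show ?thesis
    proof (cases "wheel_adj n u v")
      case True
      have "P 1" unfolding P_def by (intro exI[of _ "[u,v]"]) (simp add: walk2 True)
      have "(LEAST k. P k) = 1"
      proof (rule Least_equality)
        fix k assume "P k" then show "1 \<le> k" using P0 uv by (cases k) auto
      qed fact
      then show ?thesis using dd uv True by simp
    next
      case False
      have un: "u \<noteq> n" "v \<noteq> n" using False uv assms unfolding wheel_adj_def wheel_center_def by auto
      have "wheel_adj n u n" "wheel_adj n n v" using un assms unfolding wheel_adj_def wheel_center_def wheel_V_def by auto
      then have "P 2" unfolding P_def by (intro exI[of _ "[u,n,v]"]) (simp add: walk3)
      have "(LEAST k. P k) = 2"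
      proof (rule Least_equality)
        show "P 2" by fact
        fix k assume "P k"
        then show "2 \<le> k" using P0 P1 uv False by (cases k; cases "k - 1"; auto)
      qed
      then show ?thesis using dd uv False by simp
    qed
  qed
qed

definition condA :: "nat set \<Rightarrow> bool" where
  "condA S \<longleftrightarrow> (\<forall>x\<in>S. sh (-2) x \<in> S \<or> sh (-1) x \<in> S \<or> sh 1 x \<in> S \<or> sh 2 x \<in> S)"
definition emp :: "nat set \<Rightarrow> nat \<Rightarrow> bool" where
  "emp S z \<longleftrightarrow> sh (-1) z \<notin> S \<and> z \<notin> S \<and> sh 1 z \<notin> S"
definition condB :: "nat set \<Rightarrow> bool" where
  "condB S \<longleftrightarrow> (\<forall>z<n. \<forall>w<n. emp S z \<longrightarrow> emp S w \<longrightarrow> w = sh (-1) z \<or> w = z \<or> w = sh 1 z)"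

lemma sh_self: "x < n \<Longrightarrow> sh a x = x \<longleftrightarrow> a mod int n = 0" "x < n \<Longrightarrow> x = sh a x \<longleftrightarrow> a mod int n = 0"
  using sh_eq_iff[of x a 0] by auto

lemmas shs = sh_eq_iff mod0_small sh_self

lemma distc: "u < n \<Longrightarrow> x < n \<Longrightarrow> wheel_dist n u x = (if u = x then 0 else if x = sh 1 u \<or> x = sh (-1) u then 1 else 2)"
  using dist[of u x] adj_cyc[of u x] by (simp add: wheel_V_def)

lemma resolving_imp:
  assumes S: "S \<subseteq> {..<n}" and R: "nonlocal_resolving n S"
  shows "condA S \<and> condB S"
proof
  have Sn: "x \<in> S \<Longrightarrow> x < n" for x using S by auto
  have res: "\<And>u v. u < n \<Longrightarrow> v < n \<Longrightarrow> u \<noteq> v \<Longrightarrow> \<not> wheel_adj n u v \<Longrightarrow> \<exists>y\<in>S. wheel_dist n u y \<noteq> wheel_dist n v y"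
    using R unfolding nonlocal_resolving_def resolves_def wheel_V_def by auto
  show "condA S"
  proof (rule ccontr)
    assume "\<not> ?thesis"
    then obtain x where x: "x \<in> S" "sh (-2) x \<notin> S" "sh (-1) x \<notin> S" "sh 1 x \<notin> S" "sh 2 x \<notin> S" unfolding condA_def by auto
    have xn: "x < n" using x Sn by auto
    have "sh (-1) x \<noteq> sh 1 x" "\<not> wheel_adj n (sh (-1) x) (sh 1 x)"
      using xn n7 by (auto simp: adj_cyc shs)
    then obtain y where y: "y \<in> S" "wheel_dist n (sh (-1) x) y \<noteq> wheel_dist n (sh 1 x) y"
      using res[of "sh (-1) x" "sh 1 x"] by auto
    have yn: "y < n" using y Sn by auto
    have "y \<noteq> sh (-1) x" "y \<noteq> sh 1 x" "y \<noteq> sh (-2) x" "y \<noteq> sh 2 x" using x y by auto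
    then show False using y(2) yn xn n7 by (auto simp: distc shs)
  qed
  show "condB S"
  proof (rule ccontr)
    assume "\<not> ?thesis"
    then obtain z w where zw: "z < n" "w < n" "emp S z" "emp S w" "w \<noteq> sh (-1) z" "w \<noteq> z" "w \<noteq> sh 1 z" unfolding condB_def by auto
    have "\<not> wheel_adj n z w" using zw by (auto simp: adj_cyc shs)
    then obtain y where y: "y \<in> S" "wheel_dist n z y \<noteq> wheel_dist n w y"
      using res[of z w] zw by auto
    have yn: "y < n" using y Sn by auto
    have "y \<noteq> sh (-1) z" "y \<noteq> sh 1 z" "y \<noteq> z" "y \<noteq> sh (-1) w" "y \<noteq> sh 1 w" "y \<noteq> w" using zw y unfolding emp_def by auto
    then show False using y(2) yn zw by (auto simp: distc)
  qed
qed

lemma sh_inj: "x < n \<Longrightarrow> y < n \<Longrightarrow> sh a x = sh a y \<longleftrightarrow> x = y"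
  using sh_solve[of x "sh a y" a] by auto

lemma imp_resolving:
  assumes S: "S \<subseteq> {..<n}" and A: "condA S" and B: "condB S"
  shows "nonlocal_resolving n S"
  unfolding nonlocal_resolving_def
proof (intro conjI ballI impI)
  show "S \<subseteq> wheel_V n" using S by (auto simp: wheel_V_def)
  fix u v assume uV: "u \<in> wheel_V n" and vV: "v \<in> wheel_V n" and uv: "u \<noteq> v \<and> \<not> wheel_adj n u v"
  have Sn: "x \<in> S \<Longrightarrow> x < n" for x using S by auto
  have un: "u < n" "v < n" using uV vV uv unfolding wheel_V_def wheel_adj_def wheel_center_def by auto
  have na: "v \<noteq> sh 1 u" "v \<noteq> sh (-1) u" using uv un by (auto simp: adj_cyc)
  show "resolves n S u v"
  proof (rule ccontr)
    assume "\<not> resolves n S u v"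
    then have H: "\<And>y. y \<in> S \<Longrightarrow> wheel_dist n u y = wheel_dist n v y" unfolding resolves_def by auto
    have uS: "u \<notin> S" using H[of u] un uv by (auto simp: distc split: if_splits)
    have vS: "v \<notin> S" using H[of v] un uv by (auto simp: distc split: if_splits)
    have H2: "\<And>y. y \<in> S \<Longrightarrow> (y = sh 1 u \<or> y = sh (-1) u) \<longleftrightarrow> (y = sh 1 v \<or> y = sh (-1) v)"
    proof -
      fix y assume y: "y \<in> S"
      have "y \<noteq> u" "y \<noteq> v" using y uS vS by auto
      then show "?thesis y" using H[OF y] un Sn[OF y] by (auto simp: distc split: if_splits)
    qed
    show False
    proof (cases "sh 1 u \<in> S")
      case True
      have "sh 1 u = sh 1 v \<or> sh 1 u = sh (-1) v" using H2[OF True] by simp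
      moreover have "sh 1 u \<noteq> sh 1 v" using un uv sh_inj by blast
      ultimately have "sh (-1) v = sh 1 u" by simp
      then have v: "v = sh 2 u" using sh_solve[of v "sh 1 u" "-1"] un by simp
      have "sh (-1) u \<notin> S"
      proof
        assume "sh (-1) u \<in> S"
        from H2[OF this] show False using v un n7 by (simp add: shs)
      qed
      moreover have "sh 3 u \<notin> S"
      proof
        assume "sh 3 u \<in> S"
        from H2[OF this] show False using v un n7 by (simp add: shs)
      qed
      moreover from A True have "sh (-2) (sh 1 u) \<in> S \<or> sh (-1) (sh 1 u) \<in> S \<or> sh 1 (sh 1 u) \<in> S \<or> sh 2 (sh 1 u) \<in> S"
        unfolding condA_def by blast
      ultimately show False using uS vS v un by simp
    next
      case F1: False
      show False
      proof (cases "sh (-1) u \<in> S")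
        case True
        have "sh (-1) u = sh 1 v \<or> sh (-1) u = sh (-1) v" using H2[OF True] by simp
        moreover have "sh (-1) u \<noteq> sh (-1) v" using un uv sh_inj by blast
        ultimately have "sh 1 v = sh (-1) u" by simp
        then have v: "v = sh (-2) u" using sh_solve[of v "sh (-1) u" "1"] un by simp
        have "sh 1 u \<notin> S" by fact
        moreover have "sh (-3) u \<notin> S"
        proof
          assume "sh (-3) u \<in> S"
          from H2[OF this] show False using v un n7 by (simp add: shs)
        qed
        moreover from A True have "sh (-2) (sh (-1) u) \<in> S \<or> sh (-1) (sh (-1) u) \<in> S \<or> sh 1 (sh (-1) u) \<in> S \<or> sh 2 (sh (-1) u) \<in> S"
          unfolding condA_def by blast
        ultimately show False using uS vS v un by simp
      next
        case F2: False
        have eu: "emp S u" using F1 F2 uS unfolding emp_def by simp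
        have "sh 1 v \<notin> S" using H2[of "sh 1 v"] F1 F2 by auto
        moreover have "sh (-1) v \<notin> S" using H2[of "sh (-1) v"] F1 F2 by auto
        ultimately have ev: "emp S v" using vS unfolding emp_def by simp
        show False using B eu ev un na uv unfolding condB_def by blast
      qed
    qed
  qed
qed


end

context W begin

lemma shnat: "sh (int k) x = (x + k) mod n"
proof -
  have "(int x + int k) mod int n = int ((x+k) mod n)" by (simp add: of_nat_mod)
  then show ?thesis unfolding sh_def by simp
qed

lemma gap_basic:
  assumes S: "S \<subseteq> {..<n}" and g: "is_gap n S i j"
  defines "d \<equiv> (j + n - i) mod n"
  shows "0 < d" "d < n" "j = sh (int d) i" "card (gap_set n i j) = d - 1"
        "\<And>k. 0 < k \<Longrightarrow> k < d \<Longrightarrow> sh (int k) i \<notin> S" "i \<in> S" "j \<in> S" "i < n" "j < n"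
proof -
  show iS: "i \<in> S" and jS: "j \<in> S" using g unfolding is_gap_def by auto
  show i: "i < n" and j: "j < n" using iS jS S by auto
  have ij: "i \<noteq> j" using g unfolding is_gap_def by auto
  show "d < n" unfolding d_def using npos by simp
  show "0 < d"
  proof (rule ccontr)
    assume "\<not> 0 < d"
    then have "(j + n - i) mod n = 0" unfolding d_def by simp
    show False
    proof (cases "j < i")
      case True
      then have "(j + n - i) mod n = j + n - i" using i by simp
      then show False using \<open>(j + n - i) mod n = 0\<close> True i by simp
    next
      case False
      then have e: "j + n - i = (j - i) + n" by simp
      have "(j + n - i) mod n = (j - i) mod n" unfolding e by (rule mod_add_self2)
      also have "\<dots> = j - i" using j by simp
      finally show False using \<open>(j + n - i) mod n = 0\<close> False ij by simp
    qed
  qed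
  show jd: "j = sh (int d) i" unfolding shnat d_def
  proof -
    have "(i + (j + n - i) mod n) mod n = (i + (j + n - i)) mod n" by (simp add: mod_add_right_eq)
    also have "i + (j + n - i) = j + n" using i by simp
    finally show "j = (i + (j + n - i) mod n) mod n" using j by simp
  qed
  have gs: "gap_set n i j = (\<lambda>k. sh (int k) i) ` {0<..<d}"
    unfolding gap_set_def d_def shnat by auto
  have inj: "inj_on (\<lambda>k. sh (int k) i) {0<..<d}"
  proof (rule inj_onI)
    fix a b assume a: "a \<in> {0<..<d}" and b: "b \<in> {0<..<d}" and e: "sh (int a) i = sh (int b) i"
    have "\<bar>int a - int b\<bar> < int n" using a b \<open>d < n\<close> by auto
    then show "a = b" using e i by (simp add: shs)
  qed
  show "card (gap_set n i j) = d - 1" unfolding gs using card_image[OF inj] by simp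
  fix k assume "0 < k" "k < d"
  then have "sh (int k) i \<in> gap_set n i j" unfolding gs by auto
  then show "sh (int k) i \<notin> S" using g unfolding is_gap_def by auto
qed

lemma useB: "condB S \<Longrightarrow> z < n \<Longrightarrow> w < n \<Longrightarrow> emp S z \<Longrightarrow> emp S w \<Longrightarrow> w = sh (-1) z \<or> w = z \<or> w = sh 1 z"
  unfolding condB_def by blast
lemma useA: "condA S \<Longrightarrow> x \<in> S \<Longrightarrow> sh (-2) x \<in> S \<or> sh (-1) x \<in> S \<or> sh 1 x \<in> S \<or> sh 2 x \<in> S"
  unfolding condA_def by blast

lemma props:
  assumes S: "S \<subseteq> {..<n}" and A: "condA S" and B: "condB S"
  shows "gap_props n S" "2 \<le> card S"
proof -
  have p1: "card (gap_set n i j) \<le> 4" if g: "is_gap n S i j" for i j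
  proof (rule ccontr)
    assume c: "\<not> ?thesis"
    note gb = gap_basic[OF S g]
    define d where "d = (j + n - i) mod n"
    have d6: "6 \<le> d" using c gb(4) unfolding d_def by simp
    have i: "i < n" by (rule gb(8))
    have nS: "\<And>k. 0 < k \<Longrightarrow> k < d \<Longrightarrow> sh (int k) i \<notin> S" using gb(5) unfolding d_def by blast
    have "sh 1 i \<notin> S" "sh 2 i \<notin> S" "sh 3 i \<notin> S" "sh 4 i \<notin> S" "sh 5 i \<notin> S"
      using nS[of 1] nS[of 2] nS[of 3] nS[of 4] nS[of 5] d6 by simp_all
    then have "emp S (sh 2 i)" "emp S (sh 4 i)" unfolding emp_def by simp_all
    from useB[OF B _ _ this] show False using i n7 by (simp add: shs)
  qed
  have p2: "i = i' \<and> j = j'" if g: "is_gap n S i j" and g': "is_gap n S i' j'"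
     and c: "card (gap_set n i j) \<ge> 3" and c': "card (gap_set n i' j') \<ge> 3" for i j i' j'
  proof -
    note gb = gap_basic[OF S g] and gb' = gap_basic[OF S g']
    define d where "d = (j + n - i) mod n"
    define d' where "d' = (j' + n - i') mod n"
    have d4: "4 \<le> d" "4 \<le> d'" using c c' gb(4) gb'(4) unfolding d_def d'_def by simp_all
    have i: "i < n" "i' < n" by (rule gb(8), rule gb'(8))
    have nS: "\<And>k. 0 < k \<Longrightarrow> k < d \<Longrightarrow> sh (int k) i \<notin> S" using gb(5) unfolding d_def by blast
    have nS': "\<And>k. 0 < k \<Longrightarrow> k < d' \<Longrightarrow> sh (int k) i' \<notin> S" using gb'(5) unfolding d'_def by blast
    have f: "sh 1 i \<notin> S" "sh 2 i \<notin> S" "sh 3 i \<notin> S" 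
      using nS[of 1] nS[of 2] nS[of 3] d4 by simp_all
    have f': "sh 1 i' \<notin> S" "sh 2 i' \<notin> S" "sh 3 i' \<notin> S" 
      using nS'[of 1] nS'[of 2] nS'[of 3] d4 by simp_all
    have e: "emp S (sh 2 i)" "emp S (sh 2 i')" using f f' unfolding emp_def by simp_all
    have "sh 2 i' = sh 1 i \<or> sh 2 i' = sh 2 i \<or> sh 2 i' = sh 3 i"
      using useB[OF B _ _ e] by simp
    moreover have "sh 2 i' \<noteq> sh 1 i"
    proof
      assume "sh 2 i' = sh 1 i"
      then have "i' = sh (-1) i" using sh_solve[of i' "sh 1 i" 2] i by simp
      then have "sh 1 i' = i" using i by simp
      then show False using f' gb(6) by simp
    qed
    moreover have "sh 2 i' \<noteq> sh 3 i"
    proof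
      assume "sh 2 i' = sh 3 i"
      then have "i' = sh 1 i" using sh_solve[of i' "sh 3 i" 2] i by simp
      then show False using f gb'(6) by simp
    qed
    ultimately have ii: "i' = i" using sh_inj i by blast
    have dd: "d = d'"
    proof (rule ccontr)
      assume "d \<noteq> d'"
      then consider "d < d'" | "d' < d" by linarith
      then show False
      proof cases
        case 1 then show False using nS'[of d] gb(1) gb(3) gb(7) ii unfolding d_def by auto
      next
        case 2 then show False using nS[of d'] gb'(1) gb'(3) gb'(7) ii unfolding d'_def by auto
      qed
    qed
    show ?thesis using ii dd gb(3) gb'(3) unfolding d_def d'_def by simp
  qed
  have p3: "card (gap_set n h i) \<le> 1" if g: "is_gap n S i j" and c: "card (gap_set n i j) \<ge> 2"
     and g': "is_gap n S h i" for i j h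
  proof (rule ccontr)
    assume c': "\<not> ?thesis"
    note gb = gap_basic[OF S g] and gb' = gap_basic[OF S g']
    define d where "d = (j + n - i) mod n"
    define d' where "d' = (i + n - h) mod n"
    have d3: "3 \<le> d" "3 \<le> d'" using c c' gb(4) gb'(4) unfolding d_def d'_def by simp_all
    have i: "i < n" "h < n" by (rule gb(8), rule gb'(8))
    have nS: "\<And>k. 0 < k \<Longrightarrow> k < d \<Longrightarrow> sh (int k) i \<notin> S" using gb(5) unfolding d_def by blast
    have nS': "\<And>k. 0 < k \<Longrightarrow> k < d' \<Longrightarrow> sh (int k) h \<notin> S" using gb'(5) unfolding d'_def by blast
    have ih: "i = sh (int d') h" using gb'(3) unfolding d'_def .
    have "sh 1 i \<notin> S" "sh 2 i \<notin> S" using nS[of 1] nS[of 2] d3 by simp_all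
    moreover have "sh (-1) i \<notin> S" "sh (-2) i \<notin> S"
      using nS'[of "d' - 1"] nS'[of "d' - 2"] d3 unfolding ih by (simp_all add: of_nat_diff)
    ultimately show False using useA[OF A gb(6)] by blast
  qed
  have p4: "card (gap_set n j k) \<le> 1" if g: "is_gap n S i j" and c: "card (gap_set n i j) \<ge> 2"
     and g': "is_gap n S j k" for i j k
  proof (rule ccontr)
    assume c': "\<not> ?thesis"
    note gb = gap_basic[OF S g] and gb' = gap_basic[OF S g']
    define d where "d = (j + n - i) mod n"
    define d' where "d' = (k + n - j) mod n"
    have d3: "3 \<le> d" "3 \<le> d'" using c c' gb(4) gb'(4) unfolding d_def d'_def by simp_all
    have i: "i < n" "j < n" by (rule gb(8), rule gb'(8))
    have nS: "\<And>k. 0 < k \<Longrightarrow> k < d \<Longrightarrow> sh (int k) i \<notin> S" using gb(5) unfolding d_def by blast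
    have nS': "\<And>k. 0 < k \<Longrightarrow> k < d' \<Longrightarrow> sh (int k) j \<notin> S" using gb'(5) unfolding d'_def by blast
    have ji: "j = sh (int d) i" using gb(3) unfolding d_def .
    have "sh 1 j \<notin> S" "sh 2 j \<notin> S" using nS'[of 1] nS'[of 2] d3 by simp_all
    moreover have "sh (-1) j \<notin> S" "sh (-2) j \<notin> S"
      using nS[of "d - 1"] nS[of "d - 2"] d3 unfolding ji by (simp_all add: of_nat_diff)
    ultimately show False using useA[OF A gb'(6)] by blast
  qed
  show "gap_props n S" unfolding gap_props_def
    using p1 p2 p3 p4 by blast
  show "2 \<le> card S"
  proof (rule ccontr)
    assume "\<not> ?thesis"
    then have "card S \<le> 1" by simp
    moreover have fin: "finite S" using S finite_subset by blast
    ultimately consider "S = {}" | s where "S = {s}" by (metis card_1_singletonE card_0_eq le_Suc_eq One_nat_def le_zero_eq)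
    then show False
    proof cases
      case 1
      have "emp S 0" "emp S (sh 2 0)" unfolding emp_def 1 by simp_all
      from useB[OF B _ _ this] show False using npos n7 by (simp add: shs)
    next
      case 2
      then have s: "s < n" using S by auto
      have "emp S (sh 2 s)" "emp S (sh 4 s)" unfolding emp_def 2 using s n7 by (simp_all add: shs)
      from useB[OF B _ _ this] show False using s n7 by (simp add: shs)
    qed
  qed
qed

end

context W begin

lemma remove_center: assumes R: "nonlocal_resolving n S" shows "nonlocal_resolving n (S - {n})"
  unfolding nonlocal_resolving_def
proof (intro conjI ballI impI)
  show "S - {n} \<subseteq> wheel_V n" using R unfolding nonlocal_resolving_def by auto
  fix u v assume uV: "u \<in> wheel_V n" and vV: "v \<in> wheel_V n" and uv: "u \<noteq> v \<and> \<not> wheel_adj n u v"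
  have un: "u < n" "v < n" using uV vV uv unfolding wheel_V_def wheel_adj_def wheel_center_def by auto
  obtain x where x: "x \<in> S" "wheel_dist n u x \<noteq> wheel_dist n v x"
    using R uV vV uv unfolding nonlocal_resolving_def resolves_def by blast
  have "x \<noteq> n"
  proof
    assume "x = n"
    have "wheel_adj n u n" "wheel_adj n v n" using un unfolding wheel_adj_def wheel_V_def wheel_center_def by auto
    then show False using x \<open>x = n\<close> un dist[of u n] dist[of v n] by (simp add: wheel_V_def)
  qed
  then show "resolves n (S - {n}) u v" using x unfolding resolves_def by blast
qed

lemma dim_le: "nonlocal_resolving n T \<Longrightarrow> nonlocal_dim n \<le> card T"
  unfolding nonlocal_dim_def by (rule Least_le) blast

lemma basis_sub: assumes B: "nonlocal_basis n S" shows "S \<subseteq> {..<n}" "finite S"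
proof -
  have R: "nonlocal_resolving n S" and c: "card S = nonlocal_dim n" using B unfolding nonlocal_basis_def by auto
  have sub: "S \<subseteq> {..n}" using R unfolding nonlocal_resolving_def wheel_V_def by auto
  show fin: "finite S" using sub finite_subset by blast
  have "n \<notin> S"
  proof
    assume "n \<in> S"
    then have "card (S - {n}) < card S" using card_Diff1_less[OF fin] by blast
    moreover have "nonlocal_dim n \<le> card (S - {n})" using dim_le remove_center R by blast
    ultimately show False using c by simp
  qed
  then show "S \<subseteq> {..<n}" using sub by (force simp: subset_iff le_less)
qed

lemma fourgap:
  assumes T: "T \<subseteq> {..<n}" and x: "x < n" "x \<in> T" "sh 1 x \<notin> T" "sh 2 x \<notin> T" "sh 3 x \<notin> T" "sh 4 x \<notin> T"
    and E: "\<And>z. z < n \<Longrightarrow> emp T z \<Longrightarrow> z = sh 2 x \<or> z = sh 3 x"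
  shows "condB T" "\<forall>i j. is_gap n T i j \<longrightarrow> card (gap_set n i j) \<noteq> 3"
proof -
  show "condB T" unfolding condB_def
  proof (intro allI impI)
    fix z w assume "z < n" "w < n" "emp T z" "emp T w"
    then show "w = sh (-1) z \<or> w = z \<or> w = sh 1 z" using E[of z] E[of w] by auto
  qed
  show "\<forall>i j. is_gap n T i j \<longrightarrow> card (gap_set n i j) \<noteq> 3"
  proof (intro allI impI)
    fix i j assume g: "is_gap n T i j"
    note gb = gap_basic[OF T g]
    define d where "d = (j + n - i) mod n"
    show "card (gap_set n i j) \<noteq> 3"
    proof
      assume c: "card (gap_set n i j) = 3"
      have d4: "d = 4" using c gb(4) unfolding d_def by simp
      have i: "i < n" by (rule gb(8))
      have nS: "\<And>k. 0 < k \<Longrightarrow> k < d \<Longrightarrow> sh (int k) i \<notin> T" using gb(5) unfolding d_def by blast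
      have f: "sh 1 i \<notin> T" "sh 2 i \<notin> T" "sh 3 i \<notin> T"
        using nS[of 1] nS[of 2] nS[of 3] d4 by simp_all
      have j4: "sh 4 i \<in> T" using gb(3) gb(7) d4 unfolding d_def by simp
      have "emp T (sh 2 i)" using f unfolding emp_def by simp
      then have "sh 2 i = sh 2 x \<or> sh 2 i = sh 3 x" using E by simp
      then have "i = x \<or> i = sh 1 x" using sh_inj[of i x 2] sh_solve[of i "sh 3 x" 2] i x by auto
      then show False using f j4 x gb(6) by auto
    qed
  qed
qed

end

context W begin

lemmas shsimp = shs sh_solve

lemma caseA:
  assumes S: "S \<subseteq> {..<n}" and A: "condA S" and i: "i < n" "i \<in> S" "sh 1 i \<notin> S" "sh 2 i \<notin> S" "sh 3 i \<notin> S" "sh 4 i \<in> S"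
    and ES: "\<And>z. z < n \<Longrightarrow> emp S z \<Longrightarrow> z = sh 2 i"
    and a: "sh (-1) i \<notin> S"
  defines "T \<equiv> insert (sh (-1) i) (S - {i})"
  shows "condA T" "\<And>z. z < n \<Longrightarrow> emp T z \<Longrightarrow> z = sh 2 (sh (-1) i) \<or> z = sh 3 (sh (-1) i)"
proof -
  have m2: "sh (-2) i \<in> S" using useA[OF A i(2)] i a by auto
  show "condA T" unfolding condA_def
  proof
    fix y assume y: "y \<in> T"
    have yn: "y < n" using y S i unfolding T_def by auto
    show "sh (-2) y \<in> T \<or> sh (-1) y \<in> T \<or> sh 1 y \<in> T \<or> sh 2 y \<in> T"
    proof (cases "y = sh (-1) i")
      case True then show ?thesis using m2 i n7 unfolding T_def by (simp add: shs)
    next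
      case False
      then have yS: "y \<in> S" "y \<noteq> i" using y unfolding T_def by auto
      show ?thesis using useA[OF A yS(1)] yS yn i m2 a n7 unfolding T_def by (auto simp: shsimp)
    qed
  qed
  fix z assume z: "z < n" "emp T z"
  show "z = sh 2 (sh (-1) i) \<or> z = sh 3 (sh (-1) i)"
    using z ES[of z] i a n7 unfolding emp_def T_def by (auto simp: shsimp)
qed

lemma caseB:
  assumes S: "S \<subseteq> {..<n}" and A: "condA S" and i: "i < n" "i \<in> S" "sh 1 i \<notin> S" "sh 2 i \<notin> S" "sh 3 i \<notin> S" "sh 4 i \<in> S"
    and ES: "\<And>z. z < n \<Longrightarrow> emp S z \<Longrightarrow> z = sh 2 i"
    and b: "sh 5 i \<notin> S"
  defines "T \<equiv> insert (sh 5 i) (S - {sh 4 i})"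
  shows "condA T" "\<And>z. z < n \<Longrightarrow> emp T z \<Longrightarrow> z = sh 2 i \<or> z = sh 3 i"
proof -
  have m6: "sh 6 i \<in> S" using useA[OF A i(6)] i b by auto
  show "condA T" unfolding condA_def
  proof
    fix y assume y: "y \<in> T"
    have yn: "y < n" using y S i unfolding T_def by auto
    show "sh (-2) y \<in> T \<or> sh (-1) y \<in> T \<or> sh 1 y \<in> T \<or> sh 2 y \<in> T"
    proof (cases "y = sh 5 i")
      case True then show ?thesis using m6 i n7 unfolding T_def by (simp add: shs)
    next
      case False
      then have yS: "y \<in> S" "y \<noteq> sh 4 i" using y unfolding T_def by auto
      show ?thesis using useA[OF A yS(1)] yS yn i m6 b n7 unfolding T_def by (auto simp: shsimp)
    qed
  qed
  fix z assume z: "z < n" "emp T z"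
  show "z = sh 2 i \<or> z = sh 3 i"
    using z ES[of z] i b n7 unfolding emp_def T_def by (auto simp: shsimp)
qed

lemma caseC1:
  assumes S: "S \<subseteq> {..<n}" and A: "condA S" and i: "i < n" "i \<in> S" "sh 1 i \<notin> S" "sh 2 i \<notin> S" "sh 3 i \<notin> S" "sh 4 i \<in> S"
    and ES: "\<And>z. z < n \<Longrightarrow> emp S z \<Longrightarrow> z = sh 2 i"
    and c: "sh (-1) i \<in> S" "sh (-2) i \<in> S \<or> sh (-3) i \<in> S"
  defines "T \<equiv> S - {i}"
  shows "condA T" "\<And>z. z < n \<Longrightarrow> emp T z \<Longrightarrow> z = sh 2 (sh (-1) i) \<or> z = sh 3 (sh (-1) i)"
proof -
  show "condA T" unfolding condA_def
  proof
    fix y assume y: "y \<in> T"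
    have yn: "y < n" using y S i unfolding T_def by auto
    have yS: "y \<in> S" "y \<noteq> i" using y unfolding T_def by auto
    show "sh (-2) y \<in> T \<or> sh (-1) y \<in> T \<or> sh 1 y \<in> T \<or> sh 2 y \<in> T"
      using useA[OF A yS(1)] yS yn i c n7 unfolding T_def by (auto simp: shsimp)
  qed
  fix z assume z: "z < n" "emp T z"
  show "z = sh 2 (sh (-1) i) \<or> z = sh 3 (sh (-1) i)"
    using z ES[of z] i c n7 unfolding emp_def T_def by (auto simp: shsimp)
qed

lemma caseC2:
  assumes S: "S \<subseteq> {..<n}" and A: "condA S" and i: "i < n" "i \<in> S" "sh 1 i \<notin> S" "sh 2 i \<notin> S" "sh 3 i \<notin> S" "sh 4 i \<in> S"
    and ES: "\<And>z. z < n \<Longrightarrow> emp S z \<Longrightarrow> z = sh 2 i"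
    and c: "sh (-1) i \<in> S" "sh 5 i \<in> S" "sh (-2) i \<notin> S" "sh (-3) i \<notin> S"
  defines "T \<equiv> insert (sh (-2) i) (insert (sh 3 i) (S - {sh (-1) i, i, sh 4 i}))"
  shows "condA T" "\<And>z. z < n \<Longrightarrow> emp T z \<Longrightarrow> z = sh 2 (sh (-2) i) \<or> z = sh 3 (sh (-2) i)"
    "card T < card S"
proof -
  have n9: "9 \<le> n"
  proof (rule ccontr)
    assume "\<not> ?thesis"
    then consider "n = 7" | "n = 8" using n7 by linarith
    then show False
    proof cases
      case 1
      then have "(3 - (-4::int)) mod int n = 0" by simp
      then have e: "sh 3 i = sh (-4) i" using sh_eq_iff[of i 3 "-4"] i by simp
      have "sh (-4) i \<in> S"
      proof (rule ccontr)
        assume "sh (-4) i \<notin> S"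
        then have "emp S (sh (-3) i)" using c unfolding emp_def by simp
        then have "sh (-3) i = sh 2 i" using ES by simp
        then show False using i n7 by (simp add: shs)
      qed
      moreover note e
      ultimately show False using i by simp
    next
      case 2
      then have "(5 - (-3::int)) mod int n = 0" by simp
      then have "sh 5 i = sh (-3) i" using sh_eq_iff[of i 5 "-3"] i by simp
      then show False using c by simp
    qed
  qed
  have m4: "sh (-4) i \<in> S"
  proof (rule ccontr)
    assume "sh (-4) i \<notin> S"
    then have "emp S (sh (-3) i)" using c unfolding emp_def by simp
    then have "sh (-3) i = sh 2 i" using ES by simp
    then show False using i n7 by (simp add: shs)
  qed
  show "condA T" unfolding condA_def
  proof
    fix y assume y: "y \<in> T"
    have yn: "y < n" using y S i unfolding T_def by auto
    show "sh (-2) y \<in> T \<or> sh (-1) y \<in> T \<or> sh 1 y \<in> T \<or> sh 2 y \<in> T"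
    proof (cases "y = sh (-2) i \<or> y = sh 3 i")
      case True
      have "sh (-4) i \<in> T" using m4 i n9 unfolding T_def by (simp add: shs)
      moreover have "sh 5 i \<in> T" using c i n9 unfolding T_def by (simp add: shs)
      ultimately show ?thesis using True i by auto
    next
      case False
      then have yS: "y \<in> S" "y \<noteq> sh (-1) i" "y \<noteq> i" "y \<noteq> sh 4 i" using y unfolding T_def by auto
      show ?thesis using useA[OF A yS(1)] yS yn i m4 c n9 unfolding T_def by (auto simp: shsimp)
    qed
  qed
  fix z assume z: "z < n" "emp T z"
  show "z = sh 2 (sh (-2) i) \<or> z = sh 3 (sh (-2) i)"
    using z ES[of z] i c m4 n9 unfolding emp_def T_def by (auto simp: shsimp)
next
  have fin: "finite S" using S finite_subset by blast
  have "card (S - {sh (-1) i, i, sh 4 i}) = card S - 3"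
    using fin c i n7 by (simp add: card_Diff_subset shs)
  moreover have "card T = card (S - {sh (-1) i, i, sh 4 i}) + 2"
    using fin c i n7 unfolding T_def by (simp add: shs)
  moreover have "3 \<le> card S"
  proof -
    have "{sh (-1) i, i, sh 4 i} \<subseteq> S" using c i by auto
    then have "card {sh (-1) i, i, sh 4 i} \<le> card S" using fin card_mono by blast
    then show ?thesis using i n7 by (simp add: shs)
  qed
  ultimately show "card T < card S" by simp
qed

lemma good:
  assumes T: "T \<subseteq> {..<n}" and A: "condA T" and x: "x < n" "x \<in> T" "sh 1 x \<notin> T" "sh 2 x \<notin> T" "sh 3 x \<notin> T" "sh 4 x \<notin> T"
    and E: "\<And>z. z < n \<Longrightarrow> emp T z \<Longrightarrow> z = sh 2 x \<or> z = sh 3 x"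
  shows "nonlocal_resolving n T" "gap_props n T" "\<forall>i j. is_gap n T i j \<longrightarrow> card (gap_set n i j) \<noteq> 3"
proof -
  note fg = fourgap[OF T x E]
  show "nonlocal_resolving n T" using imp_resolving[OF T A fg(1)] .
  show "gap_props n T" using props(1)[OF T A fg(1)] .
  show "\<forall>i j. is_gap n T i j \<longrightarrow> card (gap_set n i j) \<noteq> 3" by (rule fg(2))
qed

lemma main:
  assumes Bs: "nonlocal_basis n S"
  shows "S \<subseteq> {..<n} \<and> card S \<ge> 2 \<and> gap_props n S \<and>
         (\<exists>S'. nonlocal_basis n S' \<and> S' \<subseteq> {..<n} \<and> gap_props n S' \<and>
               (\<forall>i j. is_gap n S' i j \<longrightarrow> card (gap_set n i j) \<noteq> 3))"
proof -
  have R: "nonlocal_resolving n S" and cS: "card S = nonlocal_dim n" using Bs unfolding nonlocal_basis_def by auto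
  have S: "S \<subseteq> {..<n}" and fin: "finite S" using basis_sub[OF Bs] by auto
  have A: "condA S" and B: "condB S" using resolving_imp[OF S R] by auto
  note pr = props[OF S A B]
  have ex: "\<exists>S'. nonlocal_basis n S' \<and> S' \<subseteq> {..<n} \<and> gap_props n S' \<and>
               (\<forall>i j. is_gap n S' i j \<longrightarrow> card (gap_set n i j) \<noteq> 3)"
  proof (cases "\<forall>i j. is_gap n S i j \<longrightarrow> card (gap_set n i j) \<noteq> 3")
    case True then show ?thesis using Bs S pr by blast
  next
    case False
    then obtain i j where g: "is_gap n S i j" and c3: "card (gap_set n i j) = 3" by blast
    note gb = gap_basic[OF S g]
    define d where "d = (j + n - i) mod n"
    have d4: "d = 4" using c3 gb(4) unfolding d_def by simp
    have i: "i < n" "i \<in> S" by (rule gb(8), rule gb(6))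
    have nS: "\<And>k. 0 < k \<Longrightarrow> k < d \<Longrightarrow> sh (int k) i \<notin> S" using gb(5) unfolding d_def by blast
    have f: "sh 1 i \<notin> S" "sh 2 i \<notin> S" "sh 3 i \<notin> S"
      using nS[of 1] nS[of 2] nS[of 3] d4 by simp_all
    have j4: "sh 4 i \<in> S" using gb(3) gb(7) d4 unfolding d_def by simp
    have e2: "emp S (sh 2 i)" using f unfolding emp_def by simp
    have ES: "\<And>z. z < n \<Longrightarrow> emp S z \<Longrightarrow> z = sh 2 i"
    proof -
      fix z assume z: "z < n" "emp S z"
      have "z = sh 1 i \<or> z = sh 2 i \<or> z = sh 3 i" using useB[OF B _ z(1) e2 z(2)] by simp
      moreover have "z \<noteq> sh 1 i" using z i unfolding emp_def by auto
      moreover have "z \<noteq> sh 3 i" using z j4 unfolding emp_def by auto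
      ultimately show "z = sh 2 i" by blast
    qed
    have mini: "\<not> nonlocal_resolving n T" if "card T < card S" for T
      using dim_le[of T] that cS by auto
    show ?thesis
    proof (cases "sh (-1) i \<in> S")
      case a: False
      define T where "T = insert (sh (-1) i) (S - {i})"
      note ca = caseA[OF S A i f j4 ES a, folded T_def]
      have T: "T \<subseteq> {..<n}" using S unfolding T_def by auto
      have xs: "sh (-1) i \<in> T" "sh 1 (sh (-1) i) \<notin> T" "sh 2 (sh (-1) i) \<notin> T" "sh 3 (sh (-1) i) \<notin> T" "sh 4 (sh (-1) i) \<notin> T"
        using f i n7 unfolding T_def by (simp_all add: shs)
      note gd = good[OF T ca(1) sh_lt xs ca(2)]
      have "0 < card S" using i fin card_gt_0_iff by blast
      then have "card T = card S" using a i fin unfolding T_def by simp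
      then have "nonlocal_basis n T" using gd(1) cS unfolding nonlocal_basis_def by simp
      then show ?thesis using T gd by blast
    next
      case c1: True
      show ?thesis
      proof (cases "sh 5 i \<in> S")
        case b: False
        define T where "T = insert (sh 5 i) (S - {sh 4 i})"
        note cb = caseB[OF S A i f j4 ES b, folded T_def]
        have T: "T \<subseteq> {..<n}" using S unfolding T_def by auto
        have xs: "i \<in> T" "sh 1 i \<notin> T" "sh 2 i \<notin> T" "sh 3 i \<notin> T" "sh 4 i \<notin> T"
          using f i n7 unfolding T_def by (simp_all add: shs)
        note gd = good[OF T cb(1) i(1) xs cb(2)]
        have "0 < card S" using i fin card_gt_0_iff by blast
        then have "card T = card S" using b j4 fin unfolding T_def by simp
        then have "nonlocal_basis n T" using gd(1) cS unfolding nonlocal_basis_def by simp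
        then show ?thesis using T gd by blast
      next
        case c5: True
        show ?thesis
        proof (cases "sh (-2) i \<in> S \<or> sh (-3) i \<in> S")
          case True
          define T where "T = S - {i}"
          note cc = caseC1[OF S A i f j4 ES c1 True, folded T_def]
          have T: "T \<subseteq> {..<n}" using S unfolding T_def by auto
          have xs: "sh (-1) i \<in> T" "sh 1 (sh (-1) i) \<notin> T" "sh 2 (sh (-1) i) \<notin> T" "sh 3 (sh (-1) i) \<notin> T" "sh 4 (sh (-1) i) \<notin> T"
            using f i c1 n7 unfolding T_def by (simp_all add: shs)
          note gd = good[OF T cc(1) sh_lt xs cc(2)]
          have "card T < card S" using i fin unfolding T_def by (meson card_Diff1_less)
          then show ?thesis using mini gd(1) by blast
        next
          case False
          then have c23: "sh (-2) i \<notin> S" "sh (-3) i \<notin> S" by auto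
          define T where "T = insert (sh (-2) i) (insert (sh 3 i) (S - {sh (-1) i, i, sh 4 i}))"
          note cc = caseC2[OF S A i f j4 ES c1 c5 c23, folded T_def]
          have T: "T \<subseteq> {..<n}" using S unfolding T_def by auto
          have xs: "sh (-2) i \<in> T" "sh 1 (sh (-2) i) \<notin> T" "sh 2 (sh (-2) i) \<notin> T" "sh 3 (sh (-2) i) \<notin> T" "sh 4 (sh (-2) i) \<notin> T"
            using f i c1 n7 unfolding T_def by (simp_all add: shs)
          note gd = good[OF T cc(1) sh_lt xs cc(2)]
          then show ?thesis using mini cc(3) by blast
        qed
      qed
    qed
  qed
  show ?thesis using S pr ex by blast
qed

end

theorem lemma4p2:
  fixes n :: nat and S :: "nat set"
  assumes "n \<ge> 7" and "nonlocal_basis n S"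
  shows "S \<subseteq> {..<n} \<and> card S \<ge> 2 \<and> gap_props n S \<and>
         (\<exists>S'. nonlocal_basis n S' \<and> S' \<subseteq> {..<n} \<and> gap_props n S' \<and>
               (\<forall>i j. is_gap n S' i j \<longrightarrow> card (gap_set n i j) \<noteq> 3))"
proof -
  interpret W n using assms(1) by unfold_locales
  show ?thesis using main[OF assms(2)] .
qed

end
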